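(* Let $(q_n)_{n\geqslant1}$, $q_n:[0,\infty)\to\mathbf R$, be a sequence of nondecreasing functions such that $(q_n(t))_{n\geqslant1}$ is bounded for every fixed $t\geqslant0$. Let $\tilde q(t)=\limsup_{n\to\infty}q_n(t)$ and $\alpha=\lim_{t\to\infty}\tilde q(t)$. Then for any $\beta<\alpha$ there exist a subsequence $(q_{n_k})_{k\geqslant1}$ and a nondecreasing function $q:[0,\infty)\to\mathbf R$ such that $q_{n_k}(t)\to q(t)$ as $k\to\infty$ for every $t\geqslant0$, and $\lim_{t\to\infty}q(t)>\beta$. *)

theory Defs
  imports "HOL-Analysis.Analysis"
begin

end

theory Submission
  imports Defs "HOL-Library.Diagonal_Subsequence"
begin

lemma diag_conv:
  fixes f :: "nat \<Rightarrow> real \<Rightarrow> real" and D :: "real set"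
  assumes D: "countable D" and b: "\<And>t. t \<in> D \<Longrightarrow> bounded (range (\<lambda>n. f n t))"
  shows "\<exists>s. strict_mono s \<and> (\<forall>t\<in>D. convergent (\<lambda>k. f (s k) t))"
proof (cases "D = {}")
  case True
  then show ?thesis by (intro exI[of _ id]) (auto simp: strict_mono_def)
next
  case False
  define d where "d = from_nat_into D"
  have rd: "range d = D" using range_from_nat_into[OF False D] d_def by simp
  interpret subseqs "\<lambda>n r. convergent (\<lambda>k. f (r k) (d n))"
  proof
    fix n and s :: "nat \<Rightarrow> nat" assume s: "strict_mono s"
    have "bounded (range (\<lambda>k. f (s k) (d n)))"
      by (rule bounded_subset[OF b[of "d n"]]) (use rd in auto)
    then obtain l r where r: "strict_mono r" and l: "((\<lambda>k. f (s k) (d n)) \<circ> r) \<longlonglongrightarrow> l"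
      using bounded_imp_convergent_subsequence by blast
    show "\<exists>r'. strict_mono r' \<and> convergent (\<lambda>k. f ((s \<circ> r') k) (d n))"
      using r l by (intro exI[of _ r]) (auto simp: convergent_def o_def)
  qed
  have "convergent (\<lambda>k. f (diagseq k) (d n))" for n
  proof -
    have "convergent (\<lambda>k. f ((diagseq \<circ> (+) (Suc n)) k) (d n))"
    proof (rule diagseq_holds)
      fix r s :: "nat \<Rightarrow> nat" and n assume "strict_mono r" "convergent (\<lambda>k. f (s k) (d n))"
      then show "convergent (\<lambda>k. f ((s \<circ> r) k) (d n))"
        using convergent_subseq_convergent[of "\<lambda>k. f (s k) (d n)" r] by (simp add: o_def)
    qed
    then obtain l where "(\<lambda>k. f (diagseq (Suc n + k)) (d n)) \<longlonglongrightarrow> l"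
      by (auto simp: convergent_def o_def)
    then have "(\<lambda>k. f (diagseq (k + Suc n)) (d n)) \<longlonglongrightarrow> l" by (simp add: add.commute)
    then have "(\<lambda>k. f (diagseq k) (d n)) \<longlonglongrightarrow> l" by (rule LIMSEQ_offset)
    then show ?thesis by (auto simp: convergent_def)
  qed
  then show ?thesis using subseq_diagseq rd by blast
qed

lemma helly:
  fixes f :: "nat \<Rightarrow> real \<Rightarrow> real"
  assumes mono: "\<And>n. mono_on {0..} (f n)"
    and bdd: "\<And>t. t \<ge> 0 \<Longrightarrow> bounded (range (\<lambda>n. f n t))"
  shows "\<exists>s. strict_mono s \<and> (\<forall>t\<ge>0. convergent (\<lambda>k. f (s k) t))"
proof -
  define D :: "real set" where "D = {d\<in>\<rat>. 0 \<le> d}"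
  have cD: "countable D" unfolding D_def by (rule countable_subset[OF _ countable_rat]) auto
  obtain s1 where s1: "strict_mono s1" and c1: "\<And>t::real. t\<in>D \<Longrightarrow> convergent (\<lambda>k. f (s1 k) t)"
    using diag_conv[OF cD, of f] bdd unfolding D_def by blast
  define G where "G t = real_of_ereal (limsup (\<lambda>k. ereal (f (s1 k) t)))" for t :: real
  have L: "limsup (\<lambda>k. ereal (f (s1 k) t)) = ereal (G t)" if t: "t \<ge> 0" for t
  proof -
    obtain B where B: "\<And>n. norm (f n t) \<le> B" using bdd[OF t] unfolding bounded_iff by auto
    have Bl: "-B \<le> f n t" "f n t \<le> B" for n using B[of n] by auto
    have "limsup (\<lambda>k. ereal (f (s1 k) t)) \<le> ereal B"
      by (rule Limsup_bounded) (use Bl in auto)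
    moreover have "ereal (-B) \<le> limsup (\<lambda>k. ereal (f (s1 k) t))"
      by (rule le_Limsup) (use Bl in auto)
    ultimately show ?thesis unfolding G_def by (intro ereal_real'[symmetric]) auto
  qed
  have Gd: "(\<lambda>k. f (s1 k) d) \<longlonglongrightarrow> G d" if d: "d \<in> D" for d
  proof -
    obtain l where l: "(\<lambda>k. f (s1 k) d) \<longlonglongrightarrow> l" using c1[OF d] by (auto simp: convergent_def)
    have "limsup (\<lambda>k. ereal (f (s1 k) d)) = ereal l"
      by (rule lim_imp_Limsup) (use l in \<open>auto intro: tendsto_ereal\<close>)
    then have "G d = l" unfolding G_def by simp
    then show ?thesis using l by simp
  qed
  have Gmono: "mono_on {0..} G"
  proof (rule mono_onI)
    fix x y :: real assume xy: "x \<in> {0..}" "y \<in> {0..}" "x \<le> y"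
    have "limsup (\<lambda>k. ereal (f (s1 k) x)) \<le> limsup (\<lambda>k. ereal (f (s1 k) y))"
      by (rule Limsup_mono) (use xy mono in \<open>auto simp: mono_on_def\<close>)
    then show "G x \<le> G y" using L xy by auto
  qed
  define D2 where "D2 = {a\<in>{0..}. \<not> continuous (at a within {0..}) G}"
  have cD2: "countable D2" unfolding D2_def by (rule mono_on_ctble_discont[OF Gmono])
  obtain s2 where s2: "strict_mono s2" and c2: "\<And>t::real. t\<in>D2 \<Longrightarrow> convergent (\<lambda>k. f (s1 (s2 k)) t)"
  proof -
    have "bounded (range (\<lambda>n. f (s1 n) t))" if "t \<in> D2" for t
      by (rule bounded_subset[OF bdd[of t]]) (use that in \<open>auto simp: D2_def\<close>)
    then show ?thesis using diag_conv[OF cD2, of "\<lambda>n. f (s1 n)"] that by blast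
  qed
  have "convergent (\<lambda>k. f (s1 (s2 k)) t)" if t: "t \<ge> 0" for t
  proof (cases "t \<in> D2")
    case True then show ?thesis using c2 by blast
  next
    case False
    have cont: "continuous (at t within {0..}) G" using False t unfolding D2_def by auto
    then have tG: "(G \<longlongrightarrow> G t) (at t within {0..})" by (simp add: continuous_within)
    have "(\<lambda>k. f (s1 k) t) \<longlonglongrightarrow> G t"
    proof (cases "t = 0")
      case True
      then have "t \<in> D" unfolding D_def by auto
      then show ?thesis using Gd by blast
    next
      case False
      with t have tp: "t > 0" by simp
      show ?thesis
      proof (rule order_tendstoI)
        fix a assume a: "a < G t"
        have "eventually (\<lambda>x. a < G x) (at t within {0..})" using order_tendstoD(1)[OF tG a] .
        then obtain \<delta> where dp: "\<delta> > 0" and dl: "\<And>x. x \<in> {0..} \<Longrightarrow> x \<noteq> t \<Longrightarrow> dist x t < \<delta> \<Longrightarrow> a < G x"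
          unfolding eventually_at by blast
        obtain d where d: "d \<in> \<rat>" "max 0 (t - \<delta>) < d" "d < t"
          using Rats_dense_in_real[of "max 0 (t - \<delta>)" t] tp dp by auto
        have dD: "d \<in> D" using d unfolding D_def by auto
        have "a < G d" using dl[of d] d dp by (auto simp: dist_real_def)
        then have ev: "eventually (\<lambda>k. a < f (s1 k) d) sequentially" using order_tendstoD(1)[OF Gd[OF dD]] by blast
        have le: "f (s1 k) d \<le> f (s1 k) t" for k
          by (rule mono_onD[OF mono]) (use d t in auto)
        show "eventually (\<lambda>k. a < f (s1 k) t) sequentially"
          by (rule eventually_mono[OF ev]) (use le in \<open>blast intro: order.strict_trans2\<close>)
      next
        fix a assume a: "G t < a"
        have "eventually (\<lambda>x. G x < a) (at t within {0..})" using order_tendstoD(2)[OF tG a] .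
        then obtain \<delta> where dp: "\<delta> > 0" and dl: "\<And>x. x \<in> {0..} \<Longrightarrow> x \<noteq> t \<Longrightarrow> dist x t < \<delta> \<Longrightarrow> G x < a"
          unfolding eventually_at by blast
        obtain d where d: "d \<in> \<rat>" "t < d" "d < t + \<delta>"
          using Rats_dense_in_real[of t "t + \<delta>"] dp by auto
        have dD: "d \<in> D" using d t unfolding D_def by auto
        have "G d < a" using dl[of d] d dp t by (auto simp: dist_real_def)
        then have ev: "eventually (\<lambda>k. f (s1 k) d < a) sequentially" using order_tendstoD(2)[OF Gd[OF dD]] by blast
        have le: "f (s1 k) t \<le> f (s1 k) d" for k
          by (rule mono_onD[OF mono]) (use d t in auto)
        show "eventually (\<lambda>k. f (s1 k) t < a) sequentially"
          by (rule eventually_mono[OF ev]) (use le in \<open>blast intro: order.strict_trans1\<close>)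
      qed
    qed
    then have "((\<lambda>k. f (s1 k) t) \<circ> s2) \<longlonglongrightarrow> G t" using LIMSEQ_subseq_LIMSEQ s2 by blast
    then show ?thesis by (auto simp: convergent_def o_def)
  qed
  then show ?thesis using s1 s2 strict_mono_o[OF s1 s2] by (intro exI[of _ "s1 \<circ> s2"]) auto
qed

theorem lemma2p3:
  fixes q :: "nat \<Rightarrow> real \<Rightarrow> real" and \<alpha> :: ereal and \<beta> :: real
  assumes mono: "\<And>n. mono_on {0..} (q n)"
    and bdd: "\<And>t. t \<ge> 0 \<Longrightarrow> bounded (range (\<lambda>n. q n t))"
    and alpha: "((\<lambda>t. limsup (\<lambda>n. ereal (q n t))) \<longlongrightarrow> \<alpha>) at_top"
    and beta: "ereal \<beta> < \<alpha>"
  shows "\<exists>r :: nat \<Rightarrow> nat. strict_mono r \<and>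
           (\<exists>Q :: real \<Rightarrow> real. mono_on {0..} Q \<and>
              (\<forall>t\<ge>0. (\<lambda>k. q (r k) t) \<longlonglongrightarrow> Q t) \<and>
              (\<exists>L :: ereal. ((\<lambda>t. ereal (Q t)) \<longlongrightarrow> L) at_top \<and> L > ereal \<beta>))"
proof -
  have "eventually (\<lambda>t. ereal \<beta> < limsup (\<lambda>n. ereal (q n t))) at_top"
    using order_tendstoD(1)[OF alpha beta] .
  then obtain N where N: "\<And>t. t \<ge> N \<Longrightarrow> ereal \<beta> < limsup (\<lambda>n. ereal (q n t))"
    unfolding eventually_at_top_linorder by blast
  define T where "T = max N 0"
  have T0: "T \<ge> 0" and TL: "ereal \<beta> < limsup (\<lambda>n. ereal (q n T))" using N[of T] by (auto simp: T_def)
  obtain \<beta>' where b1: "ereal \<beta> < ereal \<beta>'" and b2: "ereal \<beta>' < limsup (\<lambda>n. ereal (q n T))"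
    using ereal_dense2[OF TL] by blast
  define S where "S = {n. \<beta>' < q n T}"
  have infS: "infinite S"
  proof
    assume "finite S"
    then obtain k where k: "S \<subseteq> {..<k}" using finite_nat_bounded by blast
    have "eventually (\<lambda>n. ereal (q n T) \<le> ereal \<beta>') sequentially"
      by (rule eventually_sequentiallyI[of k]) (use k in \<open>force simp: S_def subset_iff not_less\<close>)
    then have "limsup (\<lambda>n. ereal (q n T)) \<le> ereal \<beta>'" by (rule Limsup_bounded)
    with b2 show False by simp
  qed
  define r0 where "r0 = enumerate S"
  have r0: "strict_mono r0" using strict_mono_enumerate[OF infS] r0_def by simp
  have r0S: "\<beta>' < q (r0 n) T" for n using enumerate_in_set[OF infS] unfolding r0_def S_def by blast
  obtain s where s: "strict_mono s" and cs: "\<And>t. t \<ge> 0 \<Longrightarrow> convergent (\<lambda>k. q (r0 (s k)) t)"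
  proof -
    have "\<exists>s. strict_mono s \<and> (\<forall>t\<ge>0. convergent (\<lambda>k. q (r0 (s k)) t))"
    proof (rule helly)
      show "mono_on {0..} (q (r0 n))" for n by (rule mono)
      show "bounded (range (\<lambda>n. q (r0 n) t))" if "t \<ge> 0" for t
        by (rule bounded_subset[OF bdd[OF that]]) auto
    qed
    then show ?thesis using that by blast
  qed
  define r where "r = r0 \<circ> s"
  have r: "strict_mono r" unfolding r_def using strict_mono_o[OF r0 s] .
  define Q where "Q t = lim (\<lambda>k. q (r k) t)" for t
  have lim: "(\<lambda>k. q (r k) t) \<longlonglongrightarrow> Q t" if "t \<ge> 0" for t
    using cs[OF that] unfolding Q_def r_def by (simp add: convergent_LIMSEQ_iff o_def)
  have Qmono: "mono_on {0..} Q"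
  proof (rule mono_onI)
    fix x y :: real assume xy: "x \<in> {0..}" "y \<in> {0..}" "x \<le> y"
    show "Q x \<le> Q y"
      by (rule LIMSEQ_le[OF lim lim]) (use xy mono_onD[OF mono] in auto)
  qed
  have QT: "\<beta>' \<le> Q T"
    by (rule LIMSEQ_le_const[OF lim[OF T0]]) (use r0S in \<open>auto simp: r_def less_imp_le\<close>)
  define L where "L = (SUP t\<in>{0::real..}. ereal (Q t))"
  have QL: "((\<lambda>t. ereal (Q t)) \<longlongrightarrow> L) at_top"
  proof (rule order_tendstoI)
    fix a assume "a < L"
    then obtain t0 where t0: "t0 \<ge> 0" "a < ereal (Q t0)" unfolding L_def less_SUP_iff by auto
    show "eventually (\<lambda>t. a < ereal (Q t)) at_top"
    proof (rule eventually_mono[OF eventually_ge_at_top[of t0]])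
      fix t assume "t0 \<le> t"
      then have "Q t0 \<le> Q t" using mono_onD[OF Qmono] t0 by auto
      then show "a < ereal (Q t)" using t0 by (meson ereal_less_eq(3) order_less_le_trans)
    qed
  next
    fix a assume a: "L < a"
    show "eventually (\<lambda>t. ereal (Q t) < a) at_top"
    proof (rule eventually_mono[OF eventually_ge_at_top[of 0]])
      fix t :: real assume "0 \<le> t"
      then have "ereal (Q t) \<le> L" unfolding L_def by (auto intro: SUP_upper)
      then show "ereal (Q t) < a" using a by auto
    qed
  qed
  have "ereal (Q T) \<le> L" unfolding L_def using T0 by (auto intro: SUP_upper)
  then have "ereal \<beta> < L" using b1 QT by (meson ereal_less_eq(3) order_less_le_trans)
  then show ?thesis using r Qmono lim QL by blast
qed

end
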